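(* Let $\{p_n\}_{n\geq1}$ be real numbers with $0<p_n<p_{n+1}$ for all $n\geq1$ and $\lim_{n\to\infty}p_n=\infty$. Then there exists a real solution $\lambda_*>0$ of the continued fraction equation $$\lambda p_1=\cfrac{1}{\lambda p_2-\cfrac{1}{\lambda p_3-\cfrac{1}{\lambda p_4-\cdots}}}$$ satisfying $$\frac{1}{\sqrt{p_1p_2}}<\lambda_*<\frac{1}{\sqrt{p_1p_2-p_1^2}},$$ and, with $\lambda=\lambda_*$, the sequence $\{c_n\}$ defined by $c_1=p_1$, $\eta_2=-\lambda_*p_1$, $\eta_{n+1}=-\lambda_*p_n-1/\eta_n$ for $n\geq2$, and $c_n=p_n\eta_n\eta_{n-1}\cdots\eta_2$ for $n\geq2$, decays exponentially fast for all sufficiently large $n$ and satisfies, for $s\geq 0$, $$\|n^sc_n\|_{\ell^2(\mathbb{N})}\leq C\Big(n_0^{s}+\frac{p_2}{p_1}\Big)\|c_n\|_{\ell^2(\mathbb{N})},$$ where $n_0$ is the largest integer with $p_{n_0}\leq4p_2$ and $C>0$ is a constant.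
   Context: The infinite continued fraction is understood as follows. For $n\geq2$ and $\lambda\geq 2/p_n$ let $G_n(\lambda)=\frac{\lambda p_n-\sqrt{\lambda^2p_n^2-4}}{2}$ (formally the continued fraction with all entries $\lambda p_n$). For $n\geq2$, $k\geq0$ let $F_{n,k}(\lambda)=\cfrac{1}{\lambda p_n-\cfrac{1}{\lambda p_{n+1}-\cdots\cfrac{1}{\lambda p_{n+k}-G_{n+k+1}(\lambda)}}}$, and $F_n(\lambda)=\lim_{k\to\infty}F_{n,k}(\lambda)$ where this limit exists; the equation is $\lambda p_1=F_2(\lambda)$. *)

theory Defs
  imports "HOL-Analysis.Analysis"
begin

text \<open>Sequences p are indexed from 1; the value p 0 is irrelevant.\<close>

text \<open>G_n(lambda): the formal continued fraction with all entries lambda p_n.\<close>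
definition cf_G :: "(nat \<Rightarrow> real) \<Rightarrow> real \<Rightarrow> nat \<Rightarrow> real" where
  "cf_G p l n = (l * p n - sqrt ((l * p n)^2 - 4)) / 2"

fun cf_F :: "(nat \<Rightarrow> real) \<Rightarrow> real \<Rightarrow> nat \<Rightarrow> nat \<Rightarrow> real" where
  "cf_F p l n 0 = 1 / (l * p n - cf_G p l (Suc n))"
| "cf_F p l n (Suc k) = 1 / (l * p n - cf_F p l (Suc n) k)"

definition cf_den :: "(nat \<Rightarrow> real) \<Rightarrow> real \<Rightarrow> nat \<Rightarrow> nat \<Rightarrow> real" where
  "cf_den p l n k = l * p n - (case k of 0 \<Rightarrow> cf_G p l (Suc n) | Suc k' \<Rightarrow> cf_F p l (Suc n) k')"

text \<open>F_{n,k}(lambda) is genuinely defined: the tail G_{n+k+1} is defined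
  (lambda >= 2/p_{n+k+1}) and no denominator vanishes.\<close>
definition cf_defined :: "(nat \<Rightarrow> real) \<Rightarrow> real \<Rightarrow> nat \<Rightarrow> nat \<Rightarrow> bool" where
  "cf_defined p l n k \<longleftrightarrow> 2 / p (n + k + 1) \<le> l \<and> (\<forall>j\<le>k. cf_den p l (n + j) (k - j) \<noteq> 0)"

definition cf_equation :: "(nat \<Rightarrow> real) \<Rightarrow> real \<Rightarrow> bool" where
  "cf_equation p l \<longleftrightarrow>
     (\<forall>\<^sub>F k in sequentially. cf_defined p l 2 k) \<and>
     ((\<lambda>k. cf_F p l 2 k) \<longlonglongrightarrow> l * p 1)"

text \<open>cf_eta p l k = eta_{k+2}: eta_2 = -l p_1, eta_{n+1} = -l p_n - 1/eta_n (n >= 2).\<close>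
fun cf_eta :: "(nat \<Rightarrow> real) \<Rightarrow> real \<Rightarrow> nat \<Rightarrow> real" where
  "cf_eta p l 0 = - l * p 1"
| "cf_eta p l (Suc k) = - l * p (k + 2) - 1 / cf_eta p l k"

text \<open>c_1 = p_1, c_n = p_n eta_n ... eta_2 for n >= 2 (c_0 unused, set to 0).\<close>
definition cf_c :: "(nat \<Rightarrow> real) \<Rightarrow> real \<Rightarrow> nat \<Rightarrow> real" where
  "cf_c p l n = (if n = 0 then 0 else if n = 1 then p 1
                 else p n * (\<Prod>j\<in>{2..n}. cf_eta p l (j - 2)))"

definition cf_n0 :: "(nat \<Rightarrow> real) \<Rightarrow> nat" where
  "cf_n0 p = Max {n. 1 \<le> n \<and> p n \<le> 4 * p 2}"

end

theory Submission imports Defs begin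

fun cfX :: "(nat \<Rightarrow> real) \<Rightarrow> real \<Rightarrow> nat \<Rightarrow> real" where
  "cfX p l 0 = 1"
| "cfX p l (Suc 0) = l * p 1"
| "cfX p l (Suc (Suc n)) = l * p (n+2) * cfX p l (Suc n) - cfX p l n"

lemma cfX_cont: "isCont (\<lambda>l. cfX p l n) x \<and> isCont (\<lambda>l. cfX p l (Suc n)) x"
  by (induction n) (auto intro!: continuous_intros)

definition cfS :: "(nat \<Rightarrow> real) \<Rightarrow> real set" where
  "cfS p = {l. 0 < l \<and> (\<forall>n. 0 < cfX p l n)}"

definition Wf :: "real \<Rightarrow> nat \<Rightarrow> real" where
  "Wf s j = (real (Suc j) powr s)^2 / 9^j"

lemma Wf_nonneg: "Wf s j \<ge> 0" unfolding Wf_def by simp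

lemma Wf_summable: "summable (Wf s)"
proof -
  define q where "q j = (real (Suc (Suc j)) / real (Suc j)) powr s" for j
  have "(\<lambda>j. real (Suc (Suc j)) / real (Suc j)) \<longlonglongrightarrow> 1"
    using LIMSEQ_Suc[OF LIMSEQ_Suc_n_over_n] by simp
  then have "q \<longlonglongrightarrow> 1 powr s" unfolding q_def by (intro tendsto_intros) auto
  then have "eventually (\<lambda>j. q j < 2) sequentially" by (intro order_tendstoD) auto
  then obtain N where N: "\<And>j. j \<ge> N \<Longrightarrow> q j < 2" unfolding eventually_sequentially by blast
  show ?thesis
  proof (rule summable_ratio_test[of "1/2" N])
    fix j assume j: "j \<ge> N"
    have qn: "0 \<le> q j" unfolding q_def by simp
    have "real (Suc (Suc j)) = (real (Suc (Suc j)) / real (Suc j)) * real (Suc j)" by simp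
    then have "real (Suc (Suc j)) powr s = q j * real (Suc j) powr s"
      unfolding q_def by (metis powr_mult of_nat_0_le_iff divide_nonneg_nonneg)
    then have e: "Wf s (Suc j) = (q j)^2 / 9 * Wf s j" unfolding Wf_def by (simp add: power_mult_distrib)
    have "(q j)^2 \<le> 2^2" using N[OF j] qn by (intro power_mono) auto
    then have "(q j)^2 / 9 \<le> 1/2" by simp
    then have "(q j)^2 / 9 * Wf s j \<le> 1/2 * Wf s j" using Wf_nonneg[of s j] by (intro mult_right_mono)
    then show "norm (Wf s (Suc j)) \<le> 1/2 * norm (Wf s j)" using e Wf_nonneg[of s j] Wf_nonneg[of s "Suc j"] by simp
  qed simp
qed

definition Cc :: "real \<Rightarrow> real" where
  "Cc s = sqrt (1 + (2 powr s)^2 * suminf (Wf s))"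

lemma Cc_pos: "Cc s > 0"
proof -
  have "suminf (Wf s) \<ge> 0" using Wf_summable Wf_nonneg by (intro suminf_nonneg)
  then have "(2 powr s)^2 * suminf (Wf s) \<ge> 0" by simp
  then have "1 + (2 powr s)^2 * suminf (Wf s) > 0" by linarith
  then show ?thesis unfolding Cc_def by simp
qed

context
  fixes p :: "nat \<Rightarrow> real"
  assumes pos: "\<forall>n\<ge>1. 0 < p n \<and> p n < p (Suc n)"
      and lim: "filterlim p at_top sequentially"
begin

lemma p_pos: "n \<ge> 1 \<Longrightarrow> p n > 0" using pos by auto

lemma p_mono: assumes "1 \<le> a" "a \<le> b" shows "p a \<le> p b"
  using assms(2)
proof (induction b rule: dec_induct)
  case (step n) then show ?case using pos[rule_format, of n] assms(1) by auto
qed auto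

lemma p12: "p 1 < p 2" using pos[rule_format, of 1] by (simp add: numeral_2_eq_2)

lemma grow:
  assumes "l * p (n+2) \<ge> 2" "cfX p l (Suc n) \<ge> cfX p l n" "cfX p l n > 0"
  shows "m \<ge> n \<Longrightarrow> cfX p l (Suc m) \<ge> cfX p l m \<and> cfX p l m > 0"
proof (induction m rule: dec_induct)
  case base then show ?case using assms by auto
next
  case (step m)
  have "l * p (m+2) \<ge> l * p (n+2)"
  proof -
    have "p (n+2) > 0" by (rule p_pos) simp
    then have "l > 0" using assms(1) by (metis not_le mult_nonpos_nonneg le_less_linear order.strict_trans1 zero_less_numeral less_imp_le)
    moreover have "p (n+2) \<le> p (m+2)" using step by (intro p_mono) auto
    ultimately show ?thesis by (simp add: mult_left_mono)
  qed
  then have "l * p (m+2) \<ge> 2" using assms(1) by linarith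
  then have "l * p (m+2) * cfX p l (Suc m) \<ge> 2 * cfX p l (Suc m)"
    using step.IH by (intro mult_right_mono) auto
  then have "cfX p l (Suc (Suc m)) \<ge> 2 * cfX p l (Suc m) - cfX p l m"
    by simp
  then show ?case using step.IH by (intro conjI; linarith)
qed

lemma S_ne: "2 / p 1 \<in> cfS p"
proof -
  let ?l = "2 / p 1"
  have p1: "p 1 > 0" by (rule p_pos) simp
  have "?l * p (0+2) \<ge> 2"
    using p12 p1 by (simp add: field_simps numeral_2_eq_2)
  moreover have "cfX p ?l (Suc 0) \<ge> cfX p ?l 0" using p1 by simp
  ultimately have "\<forall>m. cfX p ?l m > 0" using grow[of ?l 0] by auto
  then show ?thesis using p1 by (simp add: cfS_def)
qed

lemma S_lower: "l \<in> cfS p \<Longrightarrow> 1 / sqrt (p 1 * p 2) < l"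
proof -
  assume l: "l \<in> cfS p"
  then have l0: "l > 0" and x2: "cfX p l 2 > 0" by (auto simp: cfS_def)
  have p1: "p 1 > 0" by (rule p_pos) simp
  have p2: "p 2 > 0" by (rule p_pos) simp
  have "cfX p l 2 = l * p 2 * (l * p 1) - 1" by (simp add: numeral_2_eq_2)
  then have "1 < l^2 * (p 1 * p 2)" using x2 by (simp add: power2_eq_square algebra_simps)
  then have "1 < (l * sqrt (p 1 * p 2))^2" using p1 p2 by (simp add: power_mult_distrib)
  then have "1 < l * sqrt (p 1 * p 2)"
    using l0 p1 p2 by (smt (verit) one_power2 power_mono real_sqrt_ge_zero mult_nonneg_nonneg)
  then show ?thesis using p1 p2 by (simp add: field_simps)
qed

lemma S_bdd: "bdd_below (cfS p)"
  by (rule bdd_belowI[of _ 0]) (auto simp: cfS_def)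

definition "lam = Inf (cfS p)"

lemma lam_ge: "1 / sqrt (p 1 * p 2) \<le> lam"
  unfolding lam_def using S_ne S_lower by (intro cInf_greatest) (auto intro: less_imp_le)

lemma lam_pos: "lam > 0"
proof -
  have "p 1 > 0" "p 2 > 0" by (rule p_pos, simp)+
  then have "1 / sqrt (p 1 * p 2) > 0" by simp
  then show ?thesis using lam_ge by linarith
qed

lemma lam_nonneg_X: "cfX p lam n \<ge> 0"
proof (rule ccontr)
  assume "\<not> cfX p lam n \<ge> 0"
  then have neg: "cfX p lam n < 0" by simp
  have "eventually (\<lambda>l. cfX p l n < 0) (at lam)"
    using cfX_cont[where p=p and n=n and x=lam] neg unfolding isCont_def
    by (intro order_tendstoD) auto
  then obtain d where d0: "d > 0" and d1: "\<And>l. l \<noteq> lam \<Longrightarrow> dist l lam < d \<Longrightarrow> cfX p l n < 0"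
    by (auto simp: eventually_at)
  have d: "d > 0" "\<And>l. dist l lam < d \<Longrightarrow> cfX p l n < 0"
    using d0 d1 neg by (auto, metis)
  have "Inf (cfS p) < lam + d" using d lam_def by simp
  then obtain l where l: "l \<in> cfS p" "l < lam + d"
    using S_ne S_bdd by (subst (asm) cInf_less_iff) auto
  have "lam \<le> l" unfolding lam_def using l S_bdd by (intro cInf_lower)
  then have "cfX p l n < 0" using d l by (intro d(2)) (simp add: dist_real_def)
  moreover have "cfX p l n > 0" using l(1) by (simp add: cfS_def)
  ultimately show False by linarith
qed

lemma lam_pos_X: "cfX p lam n > 0 \<and> cfX p lam (Suc n) > 0"
proof (induction n)
  case 0 then show ?case using lam_pos p_pos[of 1] by simp
next
  case (Suc n)
  have "cfX p lam (Suc (Suc n)) \<ge> 0" by (rule lam_nonneg_X)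
  moreover have "cfX p lam (Suc (Suc n)) \<noteq> 0"
  proof
    assume z: "cfX p lam (Suc (Suc n)) = 0"
    have "cfX p lam (Suc (Suc (Suc n))) = lam * p (Suc n + 2) * cfX p lam (Suc (Suc n)) - cfX p lam (Suc n)"
      by (rule cfX.simps(3))
    then have "cfX p lam (Suc (Suc (Suc n))) = - cfX p lam (Suc n)" using z by simp
    then show False using Suc lam_nonneg_X[of "Suc (Suc (Suc n))"] by linarith
  qed
  ultimately show ?case using Suc by simp
qed

lemma lam_in_S: "lam \<in> cfS p"
  using lam_pos lam_pos_X by (auto simp: cfS_def)

lemma lam_gt: "1 / sqrt (p 1 * p 2) < lam"
  by (rule S_lower[OF lam_in_S])

lemma minimal:
  assumes "lam * p (m+2) > 2"
  shows "cfX p lam (Suc m) \<le> cfX p lam m"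
proof (rule ccontr)
  assume "\<not> ?thesis"
  then have gt: "cfX p lam (Suc m) > cfX p lam m" by simp
  have ev1: "eventually (\<lambda>l. cfX p l (Suc m) - cfX p l m > 0) (at_left lam)"
  proof -
    have "isCont (\<lambda>l. cfX p l (Suc m) - cfX p l m) lam"
      using cfX_cont[where p=p and n=m and x=lam] by (intro continuous_intros) auto
    then have "((\<lambda>l. cfX p l (Suc m) - cfX p l m) \<longlongrightarrow> cfX p lam (Suc m) - cfX p lam m) (at_left lam)"
      by (simp add: isCont_def filterlim_at_split)
    then show ?thesis using gt by (intro order_tendstoD) auto
  qed
  have ev2: "eventually (\<lambda>l. \<forall>k\<in>{..m}. cfX p l k > 0) (at_left lam)"
  proof (rule eventually_ball_finite, simp, intro ballI)
    fix k
    have "((\<lambda>l. cfX p l k) \<longlongrightarrow> cfX p lam k) (at_left lam)"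
      using cfX_cont[where p=p and n=k and x=lam] by (simp add: isCont_def filterlim_at_split)
    then show "eventually (\<lambda>l. cfX p l k > 0) (at_left lam)" using lam_pos_X[of k] by (intro order_tendstoD) auto
  qed
  have ev3: "eventually (\<lambda>l. l * p (m+2) > 2) (at_left lam)"
  proof -
    have "((\<lambda>l. l * p (m+2)) \<longlongrightarrow> lam * p (m+2)) (at_left lam)"
      by (intro tendsto_intros)
    then show ?thesis using assms by (intro order_tendstoD) auto
  qed
  have ev4: "eventually (\<lambda>l. l \<in> {0<..<lam}) (at_left lam)"
    using eventually_at_left_real[OF lam_pos] .
  from ev1 ev2 ev3 ev4 have "eventually (\<lambda>l. cfX p l (Suc m) - cfX p l m > 0 \<and> (\<forall>k\<in>{..m}. cfX p l k > 0) \<and>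
      l * p (m+2) > 2 \<and> l \<in> {0<..<lam}) (at_left lam)"
    by eventually_elim auto
  from eventually_happens[OF this] have "\<exists>l. cfX p l (Suc m) - cfX p l m > 0 \<and> (\<forall>k\<in>{..m}. cfX p l k > 0) \<and>
      l * p (m+2) > 2 \<and> l \<in> {0<..<lam}" by simp
  then obtain l where l: "cfX p l (Suc m) > cfX p l m" "\<forall>k\<le>m. cfX p l k > 0" "l * p (m+2) > 2" "0 < l" "l < lam"
    by auto
  have big: "\<forall>k\<ge>m. cfX p l k > 0" using grow[of l m] l by auto
  have "l \<in> cfS p" unfolding cfS_def using l big by (auto, metis le_cases)
  then have "lam \<le> l" unfolding lam_def using S_bdd by (intro cInf_lower)
  then show False using l by simp
qed


lemma Xp: "cfX p lam n > 0" using lam_pos_X by blast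

definition "rr n = cfX p lam (Suc n) / cfX p lam n"

lemma r_pos: "rr n > 0" unfolding rr_def using Xp[of n] Xp[of "Suc n"] by simp

lemma r0: "rr 0 = lam * p 1" unfolding rr_def by simp

lemma r_rec: "rr (Suc n) = lam * p (n+2) - 1 / rr n"
  unfolding rr_def using Xp[of n] Xp[of "Suc n"] by (simp add: field_simps)

lemma r_inv: "lam * p (n+2) - rr (Suc n) = 1 / rr n" "rr n = 1 / (lam * p (n+2) - rr (Suc n))"
  using r_rec[of n] r_pos[of n] by auto

lemma r_le1: "lam * p (n+2) > 2 \<Longrightarrow> rr n \<le> 1"
  using minimal[of n] Xp[of n] unfolding rr_def by simp

lemma lam_p_mono: "1 \<le> a \<Longrightarrow> a \<le> b \<Longrightarrow> lam * p a \<le> lam * p b"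
  using p_mono lam_pos by (simp add: mult_left_mono)

lemma r_le3: assumes "lam * p (n+2) \<ge> 4" shows "rr n \<le> 1/3"
proof -
  have "lam * p (Suc n + 2) \<ge> lam * p (n+2)" by (intro lam_p_mono) auto
  then have "rr (Suc n) \<le> 1" using assms by (intro r_le1) linarith
  then have D3: "lam * p (n+2) - rr (Suc n) \<ge> 3" using assms by linarith
  have "1 / (lam * p (n+2) - rr (Suc n)) \<le> 1 / 3"
    by (rule divide_left_mono) (use D3 in auto)
  then show ?thesis using r_inv(2)[of n] by simp
qed

lemma eta_eq: "cf_eta p lam k = - rr k"
proof (induction k)
  case 0 then show ?case by (simp add: r0)
next
  case (Suc k) then show ?case by (simp add: r_rec add.commute)
qed

lemma prod_eta: "(\<Prod>j\<in>{2..m+2}. cf_eta p lam (j - 2)) = (-1)^(m+1) * cfX p lam (m+1)"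
proof (induction m)
  case 0 then show ?case by (simp add: eta_eq r0)
next
  case (Suc m)
  have e: "{2..Suc m + 2} = insert (m+3) {2..m+2}" by auto
  have rrX: "rr (m+1) * cfX p lam (m+1) = cfX p lam (m+2)"
    unfolding rr_def using Xp[of "m+1"] by simp
  have "(\<Prod>j\<in>{2..Suc m + 2}. cf_eta p lam (j - 2)) = cf_eta p lam (m+3-2) * (\<Prod>j\<in>{2..m+2}. cf_eta p lam (j - 2))"
    unfolding e by (subst prod.insert) auto
  also have "\<dots> = - rr (m+1) * ((-1)^(m+1) * cfX p lam (m+1))" by (subst Suc.IH) (simp del: cf_eta.simps add: eta_eq)
  also have "\<dots> = (-1)^(Suc (m+1)) * (rr (m+1) * cfX p lam (m+1))"
    by (simp only: power_Suc) (simp add: algebra_simps)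
  also have "\<dots> = (-1)^(Suc m + 1) * cfX p lam (Suc m + 1)" using rrX by simp
  finally show ?case .
qed

lemma c_eq: "cf_c p lam (Suc n) = p (Suc n) * (-1)^n * cfX p lam n"
proof (cases n)
  case 0 then show ?thesis by (simp add: cf_c_def)
next
  case (Suc m)
  then have "Suc n = m + 2" by simp
  then show ?thesis using prod_eta[of m] Suc by (simp add: cf_c_def)
qed

lemma r_incr: assumes "rr 1 \<ge> rr 0" shows "rr (Suc n) \<ge> rr n"
proof (induction n)
  case 0 then show ?case using assms by simp
next
  case (Suc n)
  have "p (n+3) \<ge> p (n+2)" by (intro p_mono) auto
  then have "lam * p (n+3) \<ge> lam * p (n+2)" using lam_pos by (simp add: mult_left_mono)
  moreover have "1 / rr (Suc n) \<le> 1 / rr n" using Suc r_pos[of n] by (simp add: frac_le)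
  ultimately show ?case using r_rec[of "Suc n"] r_rec[of n] by (simp add: numeral_3_eq_3 add.commute)
qed

lemma r1_lt_r0: "rr 1 < rr 0"
proof (rule ccontr)
  assume "\<not> ?thesis"
  then have inc: "rr (Suc n) \<ge> rr n" for n using r_incr by simp
  have ge: "rr n \<ge> lam * p 1" for n
  proof (induction n)
    case 0 then show ?case by (simp add: r0)
  next
    case (Suc n) then show ?case using inc[of n] by linarith
  qed
  have p1: "p 1 > 0" by (rule p_pos) simp
  define B where "B = (4 + 1 / (lam * p 1)) / lam"
  obtain N where N: "\<And>n. n \<ge> N \<Longrightarrow> p n \<ge> B"
    using lim unfolding filterlim_at_top eventually_sequentially by blast
  have "p (N+2) \<ge> B" by (rule N) simp
  then have big: "lam * p (N+2) \<ge> 4 + 1 / (lam * p 1)"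
    using lam_pos unfolding B_def by (simp add: field_simps)
  have "lam * p (Suc N + 2) \<ge> lam * p (N+2)" by (intro lam_p_mono) auto
  moreover have "1 / (lam * p 1) > 0" using p1 lam_pos by simp
  ultimately have "rr (Suc N) \<le> 1" using big by (intro r_le1) linarith
  then have "lam * p (N+2) - rr (Suc N) \<ge> 3 + 1 / (lam * p 1)" using big by linarith
  moreover have "1 / rr N = lam * p (N+2) - rr (Suc N)" using r_inv(1)[of N] by simp
  ultimately have "1 / rr N > 1 / (lam * p 1)" by linarith
  moreover have "\<not> rr N < lam * p 1 \<Longrightarrow> 1 / rr N \<le> 1 / (lam * p 1)"
    by (rule divide_left_mono) (use r_pos[of N] p1 lam_pos in auto)
  ultimately have "rr N < lam * p 1" by linarith
  then show False using ge[of N] by linarith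
qed

lemma lam_upper: "lam < 1 / sqrt (p 1 * p 2 - (p 1)^2)"
proof -
  have p1: "p 1 > 0" by (rule p_pos) simp
  have a: "lam * p 1 > 0" using p1 lam_pos by simp
  have "lam * p 2 - 1 / (lam * p 1) < lam * p 1"
    using r1_lt_r0 r_rec[of 0] r0 by (simp add: numeral_2_eq_2)
  then have "(lam * p 2 - 1 / (lam * p 1)) * (lam * p 1) < lam * p 1 * (lam * p 1)"
    using a by (rule mult_strict_right_mono)
  moreover have "(lam * p 2 - 1 / (lam * p 1)) * (lam * p 1) = lam * p 2 * (lam * p 1) - 1"
    using a p1 lam_pos by (simp add: left_diff_distrib)
  ultimately have "lam * p 2 * (lam * p 1) - 1 < lam * p 1 * (lam * p 1)" by simp
  then have q: "lam^2 * (p 1 * p 2 - (p 1)^2) < 1" by (simp add: power2_eq_square algebra_simps)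
  have qpos: "p 1 * p 2 - (p 1)^2 > 0" using p12 p1 by (simp add: power2_eq_square)
  have "(lam * sqrt (p 1 * p 2 - (p 1)^2))^2 < 1^2" using q qpos by (simp add: power_mult_distrib)
  then have "lam * sqrt (p 1 * p 2 - (p 1)^2) < 1"
    by (rule power_less_imp_less_base) simp
  then show ?thesis using qpos by (simp add: less_divide_eq)
qed

lemma c_ratio: assumes "lam * p (n+1) \<ge> 4"
  shows "p (n+2) * cfX p lam (n+1) \<le> p (n+1) * cfX p lam n / 3"
proof -
  have pp: "p (n+1) \<le> p (n+2)" "p (n+1) > 0" by (auto intro: p_mono p_pos)
  have l2: "lam * p (n+2) \<ge> 4" using lam_p_mono[of "n+1" "n+2"] assms by simp
  have "lam * p (Suc n + 2) \<ge> lam * p (n+2)" by (intro lam_p_mono) auto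
  then have r1: "rr (Suc n) \<le> 1" using l2 by (intro r_le1) linarith
  define D where "D = lam * p (n+2) - rr (Suc n)"
  have D: "D \<ge> lam * p (n+2) - 1" "rr n = 1 / D" using r1 r_inv(2)[of n] by (auto simp: D_def)
  have Dpos: "D > 0" using D l2 by linarith
  have X: "cfX p lam (n+1) = cfX p lam n / D" using D(2) Xp[of n] unfolding rr_def by (simp add: field_simps)
  have "3 * p (n+2) \<le> p (n+1) * (lam * p (n+2) - 1)"
  proof -
    have "p (n+1) * (lam * p (n+2) - 1) = (lam * p (n+1)) * p (n+2) - p (n+1)" by (simp add: algebra_simps)
    also have "\<dots> \<ge> 4 * p (n+2) - p (n+2)" using assms pp mult_right_mono[OF assms, of "p (n+2)"] by linarith
    finally show ?thesis by simp
  qed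
  also have "\<dots> \<le> p (n+1) * D" using D pp by (intro mult_left_mono) auto
  finally have "3 * p (n+2) \<le> p (n+1) * D" .
  then have "3 * p (n+2) * cfX p lam n \<le> p (n+1) * D * cfX p lam n" using Xp[of n] by (intro mult_right_mono) auto
  have "p (n+2) * cfX p lam (n+1) = (3 * p (n+2) * cfX p lam n) / (3*D)" unfolding X using Dpos by simp
  also have "\<dots> \<le> (p (n+1) * D * cfX p lam n) / (3*D)"
    by (rule divide_right_mono[OF \<open>3 * p (n+2) * cfX p lam n \<le> _\<close>]) (use Dpos in simp)
  also have "\<dots> = p (n+1) * cfX p lam n / 3" using Dpos by simp
  finally show ?thesis .
qed


lemma G_bounds: assumes "lam * p m \<ge> 4" shows "0 < cf_G p lam m" "cf_G p lam m \<le> 1/2"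
proof -
  define a where "a = lam * p m"
  have a4: "a \<ge> 4" using assms a_def by simp
  have "sqrt (a^2 - 4) < sqrt (a^2)" using a4 by (intro real_sqrt_less_mono) simp
  then have lt: "sqrt (a^2 - 4) < a" using a4 by simp
  have "(a - 1)^2 \<le> a^2 - 4" using a4 by (simp add: power2_eq_square algebra_simps)
  then have ge: "a - 1 \<le> sqrt (a^2 - 4)" by (intro real_le_rsqrt)
  show "0 < cf_G p lam m" unfolding cf_G_def a_def[symmetric] using lt by simp
  show "cf_G p lam m \<le> 1/2" unfolding cf_G_def a_def[symmetric] using ge by simp
qed

lemma inv_diff_bound:
  fixes a u v :: real
  assumes "a - u \<ge> 3" "a - v \<ge> 3"
  shows "\<bar>1 / (a - u) - 1 / (a - v)\<bar> \<le> \<bar>u - v\<bar> / 9"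
proof -
  have e: "1 / (a - u) - 1 / (a - v) = (u - v) / ((a - u) * (a - v))"
    using assms by (simp add: field_simps)
  have "9 \<le> (a - u) * (a - v)" using mult_mono[OF assms(1) assms(2)] assms by simp
  then have "\<bar>u - v\<bar> / ((a - u) * (a - v)) \<le> \<bar>u - v\<bar> / 9"
    by (intro divide_left_mono) auto
  then show ?thesis unfolding e using assms by (simp add: abs_mult abs_divide)
qed

definition "N1 = (SOME N. N \<ge> 2 \<and> (\<forall>n\<ge>N. lam * p n \<ge> 4))"

lemma N1: "N1 \<ge> 2" "n \<ge> N1 \<Longrightarrow> lam * p n \<ge> 4"
proof -
  obtain N where N: "\<And>n. n \<ge> N \<Longrightarrow> p n \<ge> 4 / lam"
    using lim unfolding filterlim_at_top eventually_sequentially by blast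
  have "\<exists>N. N \<ge> 2 \<and> (\<forall>n\<ge>N. lam * p n \<ge> 4)"
  proof (intro exI[of _ "N + 2"] conjI allI impI)
    fix n assume "n \<ge> N + 2"
    then have "p n \<ge> 4 / lam" by (intro N) simp
    then show "lam * p n \<ge> 4" using lam_pos by (simp add: field_simps)
  qed simp
  then have "N1 \<ge> 2 \<and> (\<forall>n\<ge>N1. lam * p n \<ge> 4)" unfolding N1_def by (rule someI_ex)
  then show "N1 \<ge> 2" "n \<ge> N1 \<Longrightarrow> lam * p n \<ge> 4" by auto
qed

lemma tail:
  "m \<ge> N1 \<Longrightarrow> 0 < cf_F p lam m k \<and> cf_F p lam m k \<le> 1/2 \<and>
     \<bar>cf_F p lam m k - rr (m-2)\<bar> \<le> (1/6)^(k+1) \<and> cf_den p lam m k \<ge> 3"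
proof (induction k arbitrary: m)
  case 0
  have m2: "m \<ge> 2" using 0 N1(1) by simp
  have a: "lam * p m \<ge> 4" using N1(2) 0 by simp
  have a1: "lam * p (Suc m) \<ge> 4" using N1(2) 0 by simp
  have g: "0 < cf_G p lam (Suc m)" "cf_G p lam (Suc m) \<le> 1/2" using G_bounds[OF a1] by auto
  have r1: "rr (m-1) \<le> 1/3" "rr (m-1) > 0" using r_le3[of "m-1"] a1 m2 r_pos[of "m-1"]
    by (auto simp: Suc_diff_le numeral_2_eq_2)
  have rm: "rr (m-2) = 1 / (lam * p m - rr (m-1))" using r_inv(2)[of "m-2"] m2
    by (simp add: Suc_diff_Suc numeral_2_eq_2)
  have den: "cf_den p lam m 0 = lam * p m - cf_G p lam (Suc m)" by (simp add: cf_den_def)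
  have F: "cf_F p lam m 0 = 1 / (lam * p m - cf_G p lam (Suc m))" by simp
  have d3: "lam * p m - cf_G p lam (Suc m) \<ge> 3" using a g by linarith
  have "\<bar>cf_F p lam m 0 - rr (m-2)\<bar> \<le> \<bar>cf_G p lam (Suc m) - rr (m-1)\<bar> / 9"
    unfolding F rm by (rule inv_diff_bound) (use d3 a r1 in linarith)+
  also have "\<dots> \<le> (1/6)^(0+1)"
  proof -
    have "\<bar>cf_G p lam (Suc m) - rr (m-1)\<bar> \<le> 1/2" unfolding abs_le_iff using g r1 by (intro conjI; linarith)
    then show ?thesis by simp
  qed
  finally have err: "\<bar>cf_F p lam m 0 - rr (m-2)\<bar> \<le> (1/6)^(0+1)" .
  have "1 / (lam * p m - cf_G p lam (Suc m)) \<le> 1/3" using d3 by (intro divide_left_mono) auto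
  then show ?case using d3 err unfolding den F by auto
next
  case (Suc k)
  have m2: "m \<ge> 2" using Suc N1(1) by simp
  have a: "lam * p m \<ge> 4" using N1(2) Suc by simp
  have a1: "lam * p (Suc m) \<ge> 4" using N1(2) Suc by simp
  have IH: "0 < cf_F p lam (Suc m) k" "cf_F p lam (Suc m) k \<le> 1/2"
    "\<bar>cf_F p lam (Suc m) k - rr (Suc m - 2)\<bar> \<le> (1/6)^(k+1)" using Suc.IH[of "Suc m"] Suc.prems by auto
  have r1: "rr (m-1) \<le> 1/3" "rr (m-1) > 0" using r_le3[of "m-1"] a1 m2 r_pos[of "m-1"]
    by (auto simp: Suc_diff_le numeral_2_eq_2)
  have rm: "rr (m-2) = 1 / (lam * p m - rr (m-1))" using r_inv(2)[of "m-2"] m2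
    by (simp add: Suc_diff_Suc numeral_2_eq_2)
  have sm: "Suc m - 2 = m - 1" using m2 by simp
  have den: "cf_den p lam m (Suc k) = lam * p m - cf_F p lam (Suc m) k" by (simp add: cf_den_def)
  have F: "cf_F p lam m (Suc k) = 1 / (lam * p m - cf_F p lam (Suc m) k)" by simp
  have d3: "lam * p m - cf_F p lam (Suc m) k \<ge> 3" using a IH by linarith
  have "\<bar>cf_F p lam m (Suc k) - rr (m-2)\<bar> \<le> \<bar>cf_F p lam (Suc m) k - rr (m-1)\<bar> / 9"
    unfolding F rm by (rule inv_diff_bound) (use d3 a r1 in linarith)+
  also have "\<dots> \<le> (1/6)^(k+1) / 9" using IH(3) sm by (simp add: divide_right_mono)
  also have "\<dots> \<le> (1/6)^(Suc k+1)" by simp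
  finally have err: "\<bar>cf_F p lam m (Suc k) - rr (m-2)\<bar> \<le> (1/6)^(Suc k+1)" .
  have "1 / (lam * p m - cf_F p lam (Suc m) k) \<le> 1/3" using d3 by (intro divide_left_mono) auto
  then show ?case using d3 err unfolding den F by auto
qed


lemma conv_tail: assumes "m \<ge> N1" shows "(\<lambda>k. cf_F p lam m k) \<longlonglongrightarrow> rr (m-2)"
proof (rule LIM_zero_cancel, rule Lim_null_comparison)
  show "\<forall>\<^sub>F k in sequentially. norm (cf_F p lam m k - rr (m-2)) \<le> (1/6)^(k+1)"
    using tail[OF assms] by (simp add: always_eventually)
  have "(\<lambda>k. (1/6::real)^k) \<longlonglongrightarrow> 0" by (rule LIMSEQ_power_zero) simp
  then show "(\<lambda>k. (1/6::real)^(k+1)) \<longlonglongrightarrow> 0" using LIMSEQ_Suc by simp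
qed

lemma conv: assumes "m \<ge> 2" shows "(\<lambda>k. cf_F p lam m k) \<longlonglongrightarrow> rr (m-2)"
proof (cases "m \<ge> N1")
  case True then show ?thesis by (rule conv_tail)
next
  case False
  then have "m \<le> N1" by simp
  then show ?thesis using assms
  proof (induction m rule: inc_induct)
    case base then show ?case using conv_tail[of N1] by simp
  next
    case (step n)
    have IH: "(\<lambda>k. cf_F p lam (Suc n) k) \<longlonglongrightarrow> rr (n-1)" using step.IH step.prems by simp
    have d: "lam * p n - rr (n-1) = 1 / rr (n-2)" using r_inv(1)[of "n-2"] step.prems
      by (simp add: Suc_diff_Suc numeral_2_eq_2)
    have "(\<lambda>k. 1 / (lam * p n - cf_F p lam (Suc n) k)) \<longlonglongrightarrow> 1 / (lam * p n - rr (n-1))"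
      using r_pos[of "n-2"] d by (intro tendsto_intros IH) simp
    then have "(\<lambda>k. cf_F p lam n (Suc k)) \<longlonglongrightarrow> rr (n-2)" using d by simp
    then show ?case by (rule filterlim_sequentially_Suc[THEN iffD1])
  qed
qed

lemma den_ev: assumes "m \<ge> 2" shows "eventually (\<lambda>k. cf_den p lam m k \<noteq> 0) sequentially"
proof -
  have IH: "(\<lambda>k. cf_F p lam (Suc m) k) \<longlonglongrightarrow> rr (m-1)" using conv[of "Suc m"] assms by simp
  have d: "lam * p m - rr (m-1) = 1 / rr (m-2)" using r_inv(1)[of "m-2"] assms
    by (simp add: Suc_diff_Suc numeral_2_eq_2)
  have "(\<lambda>k. lam * p m - cf_F p lam (Suc m) k) \<longlonglongrightarrow> lam * p m - rr (m-1)"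
    by (intro tendsto_intros IH)
  moreover have "lam * p m - rr (m-1) > 0" using d r_pos[of "m-2"] by simp
  ultimately have "eventually (\<lambda>k. lam * p m - cf_F p lam (Suc m) k > 0) sequentially"
    by (rule order_tendstoD)
  then have "eventually (\<lambda>k. cf_den p lam m (Suc k) \<noteq> 0) sequentially"
    by eventually_elim (simp add: cf_den_def)
  then show ?thesis by (rule eventually_sequentially_Suc[THEN iffD1])
qed

lemma cf_eq: "cf_equation p lam"
proof -
  have E1: "eventually (\<lambda>k. 2 / p (2 + k + 1) \<le> lam) sequentially"
  proof -
    obtain N where N: "\<And>n. n \<ge> N \<Longrightarrow> p n \<ge> 2 / lam"
      using lim unfolding filterlim_at_top eventually_sequentially by blast
    show ?thesis unfolding eventually_sequentially
    proof (intro exI[of _ N] allI impI)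
      fix k assume "k \<ge> N"
      then have "p (2+k+1) \<ge> 2 / lam" by (intro N) simp
      moreover have "p (2+k+1) > 0" by (rule p_pos) simp
      ultimately show "2 / p (2 + k + 1) \<le> lam" using lam_pos by (simp add: field_simps)
    qed
  qed
  have E2: "eventually (\<lambda>k. \<forall>j\<in>{..<N1}. j \<le> k \<longrightarrow> cf_den p lam (2+j) (k-j) \<noteq> 0) sequentially"
  proof (rule eventually_ball_finite, simp, intro ballI)
    fix j
    obtain K where K: "\<And>k. k \<ge> K \<Longrightarrow> cf_den p lam (2+j) k \<noteq> 0"
      using den_ev[of "2+j"] unfolding eventually_sequentially by auto
    show "eventually (\<lambda>k. j \<le> k \<longrightarrow> cf_den p lam (2+j) (k-j) \<noteq> 0) sequentially"
      unfolding eventually_sequentially by (intro exI[of _ "K+j"] allI impI K) auto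
  qed
  have "eventually (\<lambda>k. cf_defined p lam 2 k) sequentially"
    using E1 E2
  proof eventually_elim
    case (elim k)
    have "cf_den p lam (2+j) (k-j) \<noteq> 0" if "j \<le> k" for j
    proof (cases "j < N1")
      case True then show ?thesis using elim that by auto
    next
      case False
      then have "cf_den p lam (2+j) (k-j) \<ge> 3" using tail[of "2+j" "k-j"] by simp
      then show ?thesis by simp
    qed
    then show ?case using elim(1) unfolding cf_defined_def by simp
  qed
  moreover have "(\<lambda>k. cf_F p lam 2 k) \<longlonglongrightarrow> lam * p 1" using conv[of 2] r0 by simp
  ultimately show ?thesis unfolding cf_equation_def by simp
qed


definition "nn = cf_n0 p"

lemma n0_set: "finite {n. 1 \<le> n \<and> p n \<le> 4 * p 2}" "2 \<in> {n. 1 \<le> n \<and> p n \<le> 4 * p 2}"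
proof -
  obtain N where N: "\<And>n. n \<ge> N \<Longrightarrow> p n \<ge> 4 * p 2 + 1"
    using lim unfolding filterlim_at_top eventually_sequentially by blast
  have "{n. 1 \<le> n \<and> p n \<le> 4 * p 2} \<subseteq> {..N}"
  proof
    fix n assume "n \<in> {n. 1 \<le> n \<and> p n \<le> 4 * p 2}"
    then show "n \<in> {..N}" using N[of n] by (cases "n \<ge> N") auto
  qed
  then show "finite {n. 1 \<le> n \<and> p n \<le> 4 * p 2}" by (rule finite_subset) simp
  have "p 2 > 0" by (rule p_pos) simp
  then show "2 \<in> {n. 1 \<le> n \<and> p n \<le> 4 * p 2}" by simp
qed

lemma nn_ge2: "nn \<ge> 2"
  unfolding nn_def cf_n0_def using n0_set by (intro Max_ge) auto

lemma nn_gt: assumes "n > nn" shows "p n > 4 * p 2"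
proof (rule ccontr)
  assume "\<not> ?thesis"
  then have "n \<in> {n. 1 \<le> n \<and> p n \<le> 4 * p 2}" using assms nn_ge2 by simp
  then have "n \<le> nn" unfolding nn_def cf_n0_def using n0_set by (intro Max_ge) auto
  then show False using assms by simp
qed

lemma lam_p2: "lam * p 2 > 1"
proof -
  have p1: "p 1 > 0" and p2: "p 2 > 0" by (rule p_pos, simp)+
  have "sqrt (p 1 * p 2) < sqrt (p 2 * p 2)" using p12 p2 by (intro real_sqrt_less_mono) simp
  then have s: "sqrt (p 1 * p 2) < p 2" using p2 by simp
  have sp: "sqrt (p 1 * p 2) > 0" using p1 p2 by simp
  have h1: "lam * p 2 > (1 / sqrt (p 1 * p 2)) * p 2" using lam_gt p2 by (intro mult_strict_right_mono)
  have h2: "(1 / sqrt (p 1 * p 2)) * p 2 > 1" using s sp by (simp add: field_simps)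
  show ?thesis using h1 h2 by linarith
qed

lemma lam_pn: "n > nn \<Longrightarrow> lam * p n > 4"
proof -
  assume "n > nn"
  then have "p n > 4 * p 2" by (rule nn_gt)
  then have "lam * p n > lam * (4 * p 2)" using lam_pos by simp
  then show ?thesis using lam_p2 by simp
qed

definition "aa n = p (Suc n) * cfX p lam n"

lemma aa_pos: "aa n > 0" unfolding aa_def using Xp p_pos[of "Suc n"] by simp

lemma aa_decay: "aa (nn + j) \<le> aa nn / 3^j"
proof (induction j)
  case 0 then show ?case by simp
next
  case (Suc j)
  have "lam * p (nn + j + 1) \<ge> 4" using lam_pn[of "nn + j + 1"] by simp
  then have "aa (nn + j + 1) \<le> aa (nn + j) / 3" using c_ratio[of "nn + j"] unfolding aa_def
    by (simp add: numeral_2_eq_2)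
  also have "\<dots> \<le> aa nn / 3^j / 3" using Suc by (simp add: divide_right_mono)
  finally show ?case by simp
qed

lemma c_abs: "\<bar>cf_c p lam (Suc n)\<bar> = aa n"
  using c_eq[of n] p_pos[of "Suc n"] Xp[of n] unfolding aa_def by (simp add: abs_mult)

lemma c_sq: "(x * cf_c p lam (Suc n))^2 = (x * aa n)^2"
proof -
  have "(x * cf_c p lam (Suc n))^2 = (x * \<bar>cf_c p lam (Suc n)\<bar>)^2" by (simp add: power_mult_distrib)
  then show ?thesis using c_abs by simp
qed

lemma summ: assumes s: "s \<ge> 0"
  shows "summable (\<lambda>n. (real (Suc n) powr s * aa n)^2)"
    and "\<forall>j. (real (Suc (j + nn)) powr s * aa (j + nn))^2 \<le> (2 powr s * real nn powr s)^2 * (aa nn)^2 * Wf s j"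
proof -
  define K0 where "K0 = (2 powr s * real nn powr s)^2 * (aa nn)^2"
  have B1: "(real (Suc (j + nn)) powr s * aa (j + nn))^2 \<le> K0 * Wf s j" for j
  proof -
    have "real (Suc (j + nn)) \<le> 2 * real nn * real (Suc j)"
    proof -
      have h: "1 * j \<le> (2 * nn) * j" by (rule mult_le_mono1) (use nn_ge2 in simp)
      have "Suc (j + nn) \<le> 2 * nn * Suc j" using h nn_ge2 by (simp only: mult_Suc_right)
      then show ?thesis by (metis of_nat_le_iff of_nat_mult of_nat_numeral)
    qed
    then have "real (Suc (j + nn)) powr s \<le> (2 * real nn * real (Suc j)) powr s"
      using s by (intro powr_mono2) auto
    also have "\<dots> = 2 powr s * real nn powr s * real (Suc j) powr s" by (simp add: powr_mult)
    finally have w: "real (Suc (j + nn)) powr s \<le> 2 powr s * real nn powr s * real (Suc j) powr s" .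
    have "real (Suc (j + nn)) powr s * aa (j + nn) \<le> (2 powr s * real nn powr s * real (Suc j) powr s) * (aa nn / 3^j)"
      using w aa_decay[of j] aa_pos[of "j+nn"] by (intro mult_mono) (auto simp: add.commute less_imp_le)
    then have "(real (Suc (j + nn)) powr s * aa (j + nn))^2 \<le> ((2 powr s * real nn powr s * real (Suc j) powr s) * (aa nn / 3^j))^2"
      using aa_pos[of "j+nn"] by (intro power_mono) auto
    also have "\<dots> = K0 * Wf s j"
    proof -
      have t: "((3::real)^j)^2 = 9^j" by (simp add: power2_eq_square power_mult_distrib[symmetric])
      show ?thesis unfolding K0_def Wf_def by (simp add: power_mult_distrib power_divide t mult_ac)
    qed
    finally show ?thesis .
  qed
  then show "\<forall>j. (real (Suc (j + nn)) powr s * aa (j + nn))^2 \<le> (2 powr s * real nn powr s)^2 * (aa nn)^2 * Wf s j"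
    unfolding K0_def by simp
  have "summable (\<lambda>j. K0 * Wf s j)" using Wf_summable by (rule summable_mult)
  then have "summable (\<lambda>j. (real (Suc (j + nn)) powr s * aa (j + nn))^2)"
    by (rule summable_comparison_test'[where N=0]) (use B1 in simp)
  then show "summable (\<lambda>n. (real (Suc n) powr s * aa n)^2)"
    using summable_iff_shift[of "\<lambda>n. (real (Suc n) powr s * aa n)^2" nn] by simp
qed

lemma summ_aa: "summable (\<lambda>n. (aa n)^2)"
  using summ(1)[of 0] by simp

lemma main_bound: assumes s: "s \<ge> 0"
  shows "(\<Sum>n. (real (Suc n) powr s * aa n)^2) \<le> (real nn powr s)^2 * (1 + (2 powr s)^2 * suminf (Wf s)) * (\<Sum>n. (aa n)^2)"
proof -
  define b where "b n = (real (Suc n) powr s * aa n)^2" for n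
  define T where "T = (\<Sum>n. (aa n)^2)"
  define A where "A = suminf (Wf s)"
  have bs: "summable b" unfolding b_def using summ(1)[OF s] .
  have A0: "A \<ge> 0" unfolding A_def using Wf_summable Wf_nonneg by (intro suminf_nonneg)
  have T1: "(\<Sum>n<nn. (aa n)^2) \<le> T" unfolding T_def using summ_aa by (intro sum_le_suminf) auto
  have T2: "(aa nn)^2 \<le> T" unfolding T_def using summ_aa sum_le_suminf[of "\<lambda>n. (aa n)^2" "{nn}"] by simp
  have bs': "summable (\<lambda>j. b (j + nn))" using bs by (subst summable_iff_shift)
  have split: "suminf b = (\<Sum>j. b (j + nn)) + (\<Sum>n<nn. b n)" using bs by (rule suminf_split_initial_segment)
  have "(\<Sum>j. b (j + nn)) \<le> (\<Sum>j. (2 powr s * real nn powr s)^2 * (aa nn)^2 * Wf s j)"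
    using summ(2)[OF s] bs' Wf_summable unfolding b_def by (intro suminf_le) (auto intro: summable_mult)
  also have "\<dots> = (2 powr s * real nn powr s)^2 * (aa nn)^2 * A"
    unfolding A_def using Wf_summable by (rule suminf_mult)
  also have "\<dots> \<le> (2 powr s * real nn powr s)^2 * T * A"
    using T2 A0 by (intro mult_right_mono mult_left_mono) auto
  finally have P1: "(\<Sum>j. b (j + nn)) \<le> (2 powr s * real nn powr s)^2 * T * A" .
  have "(\<Sum>n<nn. b n) \<le> (\<Sum>n<nn. (real nn powr s)^2 * (aa n)^2)"
  proof (rule sum_mono)
    fix n assume "n \<in> {..<nn}"
    then have "real (Suc n) \<le> real nn" by simp
    then have "real (Suc n) powr s \<le> real nn powr s" using s by (intro powr_mono2) auto
    then have "(real (Suc n) powr s * aa n)^2 \<le> (real nn powr s * aa n)^2"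
      using aa_pos[of n] by (intro power_mono mult_right_mono) auto
    then show "b n \<le> (real nn powr s)^2 * (aa n)^2" unfolding b_def by (simp add: power_mult_distrib)
  qed
  also have "\<dots> = (real nn powr s)^2 * (\<Sum>n<nn. (aa n)^2)" by (simp add: sum_distrib_left)
  also have "\<dots> \<le> (real nn powr s)^2 * T" using T1 by (intro mult_left_mono) auto
  finally have P2: "(\<Sum>n<nn. b n) \<le> (real nn powr s)^2 * T" .
  have "suminf b \<le> (2 powr s * real nn powr s)^2 * T * A + (real nn powr s)^2 * T"
    using split P1 P2 by linarith
  also have "\<dots> = (real nn powr s)^2 * (1 + (2 powr s)^2 * A) * T" by (simp add: power_mult_distrib algebra_simps)
  finally show ?thesis unfolding b_def T_def A_def .
qed


lemma decay: "\<exists>K>0. \<exists>r. 0 < r \<and> r < 1 \<and> (\<exists>N. \<forall>n\<ge>N. \<bar>cf_c p lam n\<bar> \<le> K * r ^ n)"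
proof (intro exI conjI allI impI)
  show "aa nn * 3^(nn+1) > 0" using aa_pos by simp
  show "(0::real) < 1/3" "(1/3::real) < 1" by simp_all
  fix n assume n: "n \<ge> nn + 1"
  define j where "j = n - nn - 1"
  have j: "n = Suc (nn + j)" using n unfolding j_def by simp
  have "\<bar>cf_c p lam n\<bar> = aa (nn + j)" using c_abs j by simp
  also have "\<dots> \<le> aa nn / 3^j" by (rule aa_decay)
  also have "\<dots> = aa nn * 3^(nn+1) * (1/3)^n"
  proof -
    have t: "(3::real)^(Suc (nn+j)) = 3^(nn+1) * 3^j" by (simp add: power_add)
    have "aa nn * 3^(nn+1) * (1/3)^(Suc (nn+j)) = aa nn * 3^(nn+1) / (3^(nn+1) * 3^j)"
      by (simp only: power_one_over t) simp
    also have "\<dots> = aa nn / 3^j" by simp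
    finally show ?thesis unfolding j by simp
  qed
  finally show "\<bar>cf_c p lam n\<bar> \<le> aa nn * 3^(nn+1) * (1/3)^n" .
qed

lemma final: assumes s: "s \<ge> 0"
  shows "summable (\<lambda>n. (real (Suc n) powr s * cf_c p lam (Suc n))^2) \<and>
         sqrt (\<Sum>n. (real (Suc n) powr s * cf_c p lam (Suc n))^2)
           \<le> Cc s * (real (cf_n0 p) powr s + p 2 / p 1) * sqrt (\<Sum>n. (cf_c p lam (Suc n))^2)"
proof -
  have e1: "(\<lambda>n. (real (Suc n) powr s * cf_c p lam (Suc n))^2) = (\<lambda>n. (real (Suc n) powr s * aa n)^2)"
    using c_sq by simp
  have e2: "(\<lambda>n. (cf_c p lam (Suc n))^2) = (\<lambda>n. (aa n)^2)"
    using c_sq[of 1] by simp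
  define T where "T = (\<Sum>n. (aa n)^2)"
  define A where "A = suminf (Wf s)"
  have T0: "T \<ge> 0" unfolding T_def using summ_aa by (intro suminf_nonneg) auto
  have A0: "A \<ge> 0" unfolding A_def using Wf_summable Wf_nonneg by (intro suminf_nonneg)
  have "sqrt (\<Sum>n. (real (Suc n) powr s * aa n)^2) \<le> sqrt ((real nn powr s)^2 * (1 + (2 powr s)^2 * A) * T)"
    using main_bound[OF s] unfolding T_def A_def by simp
  also have "\<dots> = real nn powr s * Cc s * sqrt T"
    unfolding Cc_def A_def by (simp add: real_sqrt_mult)
  also have "\<dots> \<le> Cc s * (real nn powr s + p 2 / p 1) * sqrt T"
  proof -
    have "p 2 / p 1 \<ge> 0" using p_pos[of 1] p_pos[of 2] by simp
    then have "real nn powr s \<le> real nn powr s + p 2 / p 1" by simp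
    then have "Cc s * real nn powr s \<le> Cc s * (real nn powr s + p 2 / p 1)"
      using Cc_pos[of s] by (intro mult_left_mono) auto
    then have "real nn powr s * Cc s \<le> Cc s * (real nn powr s + p 2 / p 1)" by (simp add: mult.commute)
    then show ?thesis by (rule mult_right_mono) (simp add: T0)
  qed
  finally show ?thesis using summ(1)[OF s] unfolding e1 e2 T_def nn_def by simp
qed

end

theorem theorem2p2:
  "\<exists>C :: real \<Rightarrow> real. (\<forall>s\<ge>0. C s > 0) \<and>
    (\<forall>p :: nat \<Rightarrow> real.
       (\<forall>n\<ge>1. 0 < p n \<and> p n < p (Suc n)) \<and> filterlim p at_top sequentially \<longrightarrow>
       (\<exists>l. l > 0 \<and> cf_equation p l \<and>
            1 / sqrt (p 1 * p 2) < l \<and> l < 1 / sqrt (p 1 * p 2 - (p 1)^2) \<and>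
            (\<exists>K > 0. \<exists>r. 0 < r \<and> r < 1 \<and>
               (\<exists>N. \<forall>n\<ge>N. \<bar>cf_c p l n\<bar> \<le> K * r ^ n)) \<and>
            (\<forall>s\<ge>0.
               summable (\<lambda>n. (real (Suc n) powr s * cf_c p l (Suc n))^2) \<and>
               sqrt (\<Sum>n. (real (Suc n) powr s * cf_c p l (Suc n))^2)
                 \<le> C s * (real (cf_n0 p) powr s + p 2 / p 1)
                       * sqrt (\<Sum>n. (cf_c p l (Suc n))^2))))"
proof (intro exI[of _ Cc] conjI allI impI)
  fix s :: real show "Cc s > 0" by (rule Cc_pos)
next
  fix p :: "nat \<Rightarrow> real"
  assume h: "(\<forall>n\<ge>1. 0 < p n \<and> p n < p (Suc n)) \<and> filterlim p at_top sequentially"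
  then have h1: "\<forall>n\<ge>1. 0 < p n \<and> p n < p (Suc n)" and h2: "filterlim p at_top sequentially" by auto
  show "\<exists>l. l > 0 \<and> cf_equation p l \<and>
            1 / sqrt (p 1 * p 2) < l \<and> l < 1 / sqrt (p 1 * p 2 - (p 1)^2) \<and>
            (\<exists>K > 0. \<exists>r. 0 < r \<and> r < 1 \<and>
               (\<exists>N. \<forall>n\<ge>N. \<bar>cf_c p l n\<bar> \<le> K * r ^ n)) \<and>
            (\<forall>s\<ge>0.
               summable (\<lambda>n. (real (Suc n) powr s * cf_c p l (Suc n))^2) \<and>
               sqrt (\<Sum>n. (real (Suc n) powr s * cf_c p l (Suc n))^2)
                 \<le> Cc s * (real (cf_n0 p) powr s + p 2 / p 1)
                       * sqrt (\<Sum>n. (cf_c p l (Suc n))^2))"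
    using lam_pos[OF h1 h2] cf_eq[OF h1 h2] lam_gt[OF h1 h2] lam_upper[OF h1 h2] decay[OF h1 h2] final[OF h1 h2]
    by blast
qed

end
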